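(* Let $Q$ be a QNP and let $Q_M$ be the QNP obtained from $P=T(Q)$ as described in the context. If a policy $\pi$ solves the FOND problem $P=T(Q)$ (i.e. is a strong cyclic solution of it), then $\pi$ solves the QNP $Q_M$.
   Context: QNPs: $Q=\langle F,V,I,O,G\rangle$ with propositional variables $F$, numerical variables $V$ (non-negative reals), literals $p,\neg p$, $X=0$, $X>0$; actions with precondition $Pre(a)$, propositional effects $\mathit{Eff}(a)$, numerical effects $N(a)\subseteq\{Inc(X),Dec(X)\}$ (at most one per variable; $Dec(X)\in N(a)$ implies $X>0\in Pre(a)$). A state assigns truth values to the propositional variables and reals $\ge0$ to $V$; initial states satisfy $I$ (closed world); goal states satisfy $G$; for applicable $a$, successors apply propositional effects, strictly increase $X$ for $Inc(X)$, strictly decrease $X$ for $Dec(X)$, leave the rest unchanged. For $\epsilon>0$, an $\epsilon$-trajectory is such a sequence $s_0,a_0,s_1,\dots$ from an initial state in which every change of a variable has magnitude $\ge\epsilon$ unless it goes from a value $<\epsilon$ to $0$. Policies map states to actions depending only on the truth values of the propositional atoms and the atoms $X=0$; a maximal $\pi$-trajectory is infinite without goal, ends at its first goal state, or ends where $\pi$ is undefined/inapplicable; $\pi$ solves a QNP iff for every $\epsilon>0$ every maximal $\epsilon$-$\pi$-trajectory reaches a goal state. The FOND problem $T(Q)$: $n=|F|+|V|$, $Max=1+2^n$. Propositional variables: $F$, $p_{X=0}$ ($X\in V$; $X=0$/$X>0$ denote $p_{X=0}$/$\neg p_{X=0}$), $in(X)$, $depth(d)$ ($0\le d\le|V|$),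 $index(X,d)$ ($1\le d\le|V|$), counters $c(d)$ ($0\le d\le|V|$), $c_T$ over $\{0,\dots,Max\}$ encoded in binary. Initial state: $I$ plus $depth(0)$, counters $0$, other new atoms false; goal $G$. Actions: $Push(X,d)$ ($0\le d<|V|$): pre $\neg in(X),depth(d),c(d)<Max$; eff $in(X),index(X,d+1),depth(d+1),\neg depth(d),c(d):=c(d)+1,c(d+1):=0$. $Pop(X,d)$ ($1\le d\le|V|$): pre $in(X),index(X,d),depth(d)$; eff $\neg in(X),\neg index(X,d),\neg depth(d),depth(d-1)$. $Move$: pre $depth(0),c_T<Max$; eff $c_T:=c_T+1$. For $a\in O$ with no $Dec$ effect: action $a$ with pre $Pre(a)$ plus $\neg in(Y)$ for each $Inc(Y)\in N(a)$, eff $\mathit{Eff}(a)$ plus $Y>0$ for each $Inc(Y)\in N(a)$. For $a$ with a $Dec$ effect, $X$ with $Dec(X)\in N(a)$, $1\le d\le|V|$: action $a(X,d)$ with pre $Pre(a)$, $\neg in(Y)$ for $Inc(Y)\in N(a)$, $index(X,d)$; eff $\mathit{Eff}(a)$, $Y>0$ for $Inc(Y)\in N(a)$, nondeterministic $Z>0\mid Z=0$ for each $Dec(Z)\in N(a)$, $c(d'):=0$ for $d\le d'\le|V|$. A strong cyclic solution of a FOND problem is a policy such that from every state reachable from the initial state under $\pi$ some goal state is reachable under $\pi$. $Q_M$ is the QNP whose propositional variables are those of $T(Q)$ other than the atoms $p_{X=0}$, whose numerical variables are $V$, whose initial situation, goal and actions are those of $T(Q)$ except that literals $p_{X=0}$/$\neg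 p_{X=0}$ in initial situation, goal and preconditions are read as the numerical literals $X=0$/$X>0$, each effect $Y>0$ originating from $Inc(Y)$ is replaced by $Inc(Y)$, and each nondeterministic effect $Z>0\mid Z=0$ is replaced by $Dec(Z)$. Thus $T(Q)$ is the direct translation of $Q_M$ and a policy for $T(Q)$ is a policy for $Q_M$. *)

theory Defs
  imports Main "HOL.Real"
begin

datatype ('p,'v) lit = PosL 'p | NegL 'p | ZeroL 'v | PosNL 'v
  (* p, \<not>p, X = 0, X > 0 *)

datatype neff = Inc | Dec

record ('p,'v,'a) qnp =
  qF   :: "'p set"
  qV   :: "'v set"
  qI   :: "('p,'v) lit set"           (* initial situation I (closed world) *)
  qG   :: "('p,'v) lit set"
  qO   :: "'a set"
  qPre :: "'a \<Rightarrow> ('p,'v) lit set"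
  qEff :: "'a \<Rightarrow> ('p \<times> bool) set"     (* Eff(a): (p,True) = p, (p,False) = \<not>p *)
  qN   :: "'a \<Rightarrow> 'v \<Rightarrow> neff option"

fun lit_ok :: "'p set \<Rightarrow> 'v set \<Rightarrow> ('p,'v) lit \<Rightarrow> bool" where
  "lit_ok F V (PosL p) = (p \<in> F)"
| "lit_ok F V (NegL p) = (p \<in> F)"
| "lit_ok F V (ZeroL X) = (X \<in> V)"
| "lit_ok F V (PosNL X) = (X \<in> V)"

fun compl_lit :: "('p,'v) lit \<Rightarrow> ('p,'v) lit" where
  "compl_lit (PosL p) = NegL p"
| "compl_lit (NegL p) = PosL p"
| "compl_lit (ZeroL X) = PosNL X"
| "compl_lit (PosNL X) = ZeroL X"

definition wf_qnp :: "('p,'v,'a) qnp \<Rightarrow> bool" where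
  "wf_qnp Q \<longleftrightarrow>
     finite (qF Q) \<and> finite (qV Q) \<and> finite (qO Q)
   \<and> (\<forall>l \<in> qI Q. lit_ok (qF Q) (qV Q) l \<and> compl_lit l \<notin> qI Q)
   \<and> (\<forall>l \<in> qG Q. lit_ok (qF Q) (qV Q) l)
   \<and> (\<forall>a \<in> qO Q.
        (\<forall>l \<in> qPre Q a. lit_ok (qF Q) (qV Q) l)
      \<and> (\<forall>(p,b) \<in> qEff Q a. p \<in> qF Q \<and> (p, \<not> b) \<notin> qEff Q a)
      \<and> (\<forall>X. qN Q a X \<noteq> None \<longrightarrow> X \<in> qV Q)
      \<and> (\<forall>X. qN Q a X = Some Dec \<longrightarrow> PosNL X \<in> qPre Q a))"

fun holds_lit :: "('p \<Rightarrow> bool) \<Rightarrow> ('v \<Rightarrow> bool) \<Rightarrow> ('p,'v) lit \<Rightarrow> bool" where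
  "holds_lit f z (PosL p) = f p"
| "holds_lit f z (NegL p) = (\<not> f p)"
| "holds_lit f z (ZeroL X) = z X"
| "holds_lit f z (PosNL X) = (\<not> z X)"

definition apply_eff :: "('p \<times> bool) set \<Rightarrow> ('p \<Rightarrow> bool) \<Rightarrow> ('p \<Rightarrow> bool)" where
  "apply_eff E f = (\<lambda>p. if (p, True) \<in> E then True else if (p, False) \<in> E then False else f p)"

record ('s,'a) fond =
  fA    :: "'a set"
  fI    :: 's
  fGoal :: "'s \<Rightarrow> bool"
  fPre  :: "'a \<Rightarrow> 's \<Rightarrow> bool"
  fSucc :: "'a \<Rightarrow> 's \<Rightarrow> 's set"

text \<open>One step of a pi-trajectory (trajectories end at goal states).\<close>
definition fond_step :: "('s,'a) fond \<Rightarrow> ('s \<Rightarrow> 'a option) \<Rightarrow> 's \<Rightarrow> 's \<Rightarrow> bool" where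
  "fond_step P \<pi> s s' \<longleftrightarrow> \<not> fGoal P s \<and>
     (\<exists>a. \<pi> s = Some a \<and> a \<in> fA P \<and> fPre P a s \<and> s' \<in> fSucc P a s)"

definition strong_cyclic :: "('s,'a) fond \<Rightarrow> ('s \<Rightarrow> 'a option) \<Rightarrow> bool" where
  "strong_cyclic P \<pi> \<longleftrightarrow>
     (\<forall>s. (fond_step P \<pi>)\<^sup>*\<^sup>* (fI P) s \<longrightarrow> (\<exists>g. (fond_step P \<pi>)\<^sup>*\<^sup>* s g \<and> fGoal P g))"

text \<open>The propositional part of a state is an element of 'd; the numerical part is
  'v \<Rightarrow> real.\<close>

record ('d,'v,'a) gqnp =
  gA    :: "'a set"
  gInit :: "'d \<Rightarrow> ('v \<Rightarrow> bool) \<Rightarrow> bool"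
  gGoal :: "'d \<Rightarrow> ('v \<Rightarrow> bool) \<Rightarrow> bool"
  gPre  :: "'a \<Rightarrow> 'd \<Rightarrow> ('v \<Rightarrow> bool) \<Rightarrow> bool"
  gDeff :: "'a \<Rightarrow> 'd \<Rightarrow> 'd"
  gNum  :: "'a \<Rightarrow> 'v \<Rightarrow> neff option"

definition zeros :: "('v \<Rightarrow> real) \<Rightarrow> ('v \<Rightarrow> bool)" where
  "zeros v = (\<lambda>X. v X = 0)"

definition g_init :: "('d,'v,'a) gqnp \<Rightarrow> 'd \<times> ('v \<Rightarrow> real) \<Rightarrow> bool" where
  "g_init M s \<longleftrightarrow> gInit M (fst s) (zeros (snd s)) \<and> (\<forall>X. 0 \<le> snd s X)"

definition g_goal :: "('d,'v,'a) gqnp \<Rightarrow> 'd \<times> ('v \<Rightarrow> real) \<Rightarrow> bool" where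
  "g_goal M s \<longleftrightarrow> gGoal M (fst s) (zeros (snd s))"

definition g_succ :: "('d,'v,'a) gqnp \<Rightarrow> 'a \<Rightarrow> 'd \<times> ('v \<Rightarrow> real) \<Rightarrow> 'd \<times> ('v \<Rightarrow> real) \<Rightarrow> bool" where
  "g_succ M a s s' \<longleftrightarrow> fst s' = gDeff M a (fst s) \<and>
     (\<forall>X. case gNum M a X of
            Some Inc \<Rightarrow> snd s' X > snd s X
          | Some Dec \<Rightarrow> snd s' X < snd s X \<and> 0 \<le> snd s' X
          | None \<Rightarrow> snd s' X = snd s X)"

definition eps_ok :: "real \<Rightarrow> ('v \<Rightarrow> real) \<Rightarrow> ('v \<Rightarrow> real) \<Rightarrow> bool" where
  "eps_ok \<epsilon> v v' \<longleftrightarrow> (\<forall>X. v' X \<noteq> v X \<longrightarrow> (\<bar>v' X - v X\<bar> \<ge> \<epsilon> \<or> (v X < \<epsilon> \<and> v' X = 0)))"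

definition pol_applicable :: "('d,'v,'a) gqnp \<Rightarrow> ('d \<times> ('v \<Rightarrow> bool) \<Rightarrow> 'a option)
    \<Rightarrow> 'd \<times> ('v \<Rightarrow> real) \<Rightarrow> bool" where
  "pol_applicable M \<pi> s \<longleftrightarrow> (\<exists>a. \<pi> (fst s, zeros (snd s)) = Some a \<and> a \<in> gA M \<and>
      gPre M a (fst s) (zeros (snd s)))"

definition eps_step :: "('d,'v,'a) gqnp \<Rightarrow> real \<Rightarrow> ('d \<times> ('v \<Rightarrow> bool) \<Rightarrow> 'a option)
    \<Rightarrow> 'd \<times> ('v \<Rightarrow> real) \<Rightarrow> 'd \<times> ('v \<Rightarrow> real) \<Rightarrow> bool" where
  "eps_step M \<epsilon> \<pi> s s' \<longleftrightarrow> (\<exists>a. \<pi> (fst s, zeros (snd s)) = Some a \<and> a \<in> gA M \<and>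
      gPre M a (fst s) (zeros (snd s)) \<and> g_succ M a s s' \<and> eps_ok \<epsilon> (snd s) (snd s'))"

definition max_fin_traj :: "('d,'v,'a) gqnp \<Rightarrow> real \<Rightarrow> ('d \<times> ('v \<Rightarrow> bool) \<Rightarrow> 'a option)
    \<Rightarrow> (nat \<Rightarrow> 'd \<times> ('v \<Rightarrow> real)) \<Rightarrow> nat \<Rightarrow> bool" where
  "max_fin_traj M \<epsilon> \<pi> f n \<longleftrightarrow> g_init M (f 0) \<and>
     (\<forall>i<n. \<not> g_goal M (f i) \<and> eps_step M \<epsilon> \<pi> (f i) (f (Suc i))) \<and>
     (g_goal M (f n) \<or> \<not> pol_applicable M \<pi> (f n))"

definition max_inf_traj :: "('d,'v,'a) gqnp \<Rightarrow> real \<Rightarrow> ('d \<times> ('v \<Rightarrow> bool) \<Rightarrow> 'a option)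
    \<Rightarrow> (nat \<Rightarrow> 'd \<times> ('v \<Rightarrow> real)) \<Rightarrow> bool" where
  "max_inf_traj M \<epsilon> \<pi> f \<longleftrightarrow> g_init M (f 0) \<and>
     (\<forall>i. \<not> g_goal M (f i) \<and> eps_step M \<epsilon> \<pi> (f i) (f (Suc i)))"

definition qnp_solves :: "('d,'v,'a) gqnp \<Rightarrow> ('d \<times> ('v \<Rightarrow> bool) \<Rightarrow> 'a option) \<Rightarrow> bool" where
  "qnp_solves M \<pi> \<longleftrightarrow> (\<forall>\<epsilon>>0.
      (\<forall>f n. max_fin_traj M \<epsilon> \<pi> f n \<longrightarrow> (\<exists>i\<le>n. g_goal M (f i))) \<and>
      (\<forall>f. max_inf_traj M \<epsilon> \<pi> f \<longrightarrow> (\<exists>i. g_goal M (f i))))"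

text \<open>Propositional part of T(Q) without the atoms p_{X=0}; counters c(d), c_T are
  represented by their values in {0..Max} (isomorphic to their binary encoding).\<close>
record ('p,'v) tst =
  tF     :: "'p \<Rightarrow> bool"
  tIn    :: "'v \<Rightarrow> bool"
  tDepth :: "nat \<Rightarrow> bool"
  tIndex :: "'v \<Rightarrow> nat \<Rightarrow> bool"
  tC     :: "nat \<Rightarrow> nat"
  tCT    :: nat

datatype ('v,'a) tact = Push 'v nat | Pop 'v nat | Move | Act 'a | ActD 'a 'v nat

definition nV :: "('p,'v,'a) qnp \<Rightarrow> nat" where
  "nV Q = card (qV Q)"

definition MaxC :: "('p,'v,'a) qnp \<Rightarrow> nat" where
  "MaxC Q = 1 + 2 ^ (card (qF Q) + card (qV Q))"

definition has_dec :: "('p,'v,'a) qnp \<Rightarrow> 'a \<Rightarrow> bool" where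
  "has_dec Q a \<longleftrightarrow> (\<exists>X. qN Q a X = Some Dec)"

definition t_actions :: "('p,'v,'a) qnp \<Rightarrow> ('v,'a) tact set" where
  "t_actions Q =
      {Push X d | X d. X \<in> qV Q \<and> d < nV Q}
    \<union> {Pop X d | X d. X \<in> qV Q \<and> 1 \<le> d \<and> d \<le> nV Q}
    \<union> {Move}
    \<union> {Act a | a. a \<in> qO Q \<and> \<not> has_dec Q a}
    \<union> {ActD a X d | a X d. a \<in> qO Q \<and> qN Q a X = Some Dec \<and> 1 \<le> d \<and> d \<le> nV Q}"

fun t_pre :: "('p,'v,'a) qnp \<Rightarrow> ('v,'a) tact \<Rightarrow> ('p,'v) tst \<Rightarrow> ('v \<Rightarrow> bool) \<Rightarrow> bool" where
  "t_pre Q (Push X d) t z = (\<not> tIn t X \<and> tDepth t d \<and> tC t d < MaxC Q)"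
| "t_pre Q (Pop X d) t z = (tIn t X \<and> tIndex t X d \<and> tDepth t d)"
| "t_pre Q Move t z = (tDepth t 0 \<and> tCT t < MaxC Q)"
| "t_pre Q (Act a) t z = ((\<forall>l \<in> qPre Q a. holds_lit (tF t) z l) \<and>
      (\<forall>Y. qN Q a Y = Some Inc \<longrightarrow> \<not> tIn t Y))"
| "t_pre Q (ActD a X d) t z = ((\<forall>l \<in> qPre Q a. holds_lit (tF t) z l) \<and>
      (\<forall>Y. qN Q a Y = Some Inc \<longrightarrow> \<not> tIn t Y) \<and> tIndex t X d)"

fun t_deff :: "('p,'v,'a) qnp \<Rightarrow> ('v,'a) tact \<Rightarrow> ('p,'v) tst \<Rightarrow> ('p,'v) tst" where
  "t_deff Q (Push X d) t = t\<lparr>tIn := (tIn t)(X := True),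
      tIndex := (tIndex t)(X := (tIndex t X)(d + 1 := True)),
      tDepth := (tDepth t)(d := False, d + 1 := True),
      tC := (tC t)(d := tC t d + 1, d + 1 := 0)\<rparr>"
| "t_deff Q (Pop X d) t = t\<lparr>tIn := (tIn t)(X := False),
      tIndex := (tIndex t)(X := (tIndex t X)(d := False)),
      tDepth := (tDepth t)(d := False, d - 1 := True)\<rparr>"
| "t_deff Q Move t = t\<lparr>tCT := tCT t + 1\<rparr>"
| "t_deff Q (Act a) t = t\<lparr>tF := apply_eff (qEff Q a) (tF t)\<rparr>"
| "t_deff Q (ActD a X d) t = t\<lparr>tF := apply_eff (qEff Q a) (tF t),
      tC := (\<lambda>d'. if d \<le> d' \<and> d' \<le> nV Q then 0 else tC t d')\<rparr>"

text \<open>Numerical effects (as in Q_M; in T(Q) Inc(Y) becomes Y>0 and Dec(Z) becomes Z>0 | Z=0).\<close>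
fun t_num :: "('p,'v,'a) qnp \<Rightarrow> ('v,'a) tact \<Rightarrow> 'v \<Rightarrow> neff option" where
  "t_num Q (Act a) = qN Q a"
| "t_num Q (ActD a X d) = qN Q a"
| "t_num Q _ = (\<lambda>_. None)"

definition t_init :: "('p,'v,'a) qnp \<Rightarrow> ('p,'v) tst" where
  "t_init Q = \<lparr>tF = (\<lambda>p. PosL p \<in> qI Q), tIn = (\<lambda>_. False), tDepth = (\<lambda>d. d = 0),
      tIndex = (\<lambda>_ _. False), tC = (\<lambda>_. 0), tCT = 0\<rparr>"

definition init_z :: "('p,'v,'a) qnp \<Rightarrow> 'v \<Rightarrow> bool" where
  "init_z Q = (\<lambda>X. ZeroL X \<in> qI Q)"

definition t_goal :: "('p,'v,'a) qnp \<Rightarrow> ('p,'v) tst \<Rightarrow> ('v \<Rightarrow> bool) \<Rightarrow> bool" where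
  "t_goal Q t z \<longleftrightarrow> (\<forall>l \<in> qG Q. holds_lit (tF t) z l)"

text \<open>The FOND problem T(Q); its states are pairs (propositional part, values of p_{X=0}).\<close>
definition TQ :: "('p,'v,'a) qnp \<Rightarrow> (('p,'v) tst \<times> ('v \<Rightarrow> bool), ('v,'a) tact) fond" where
  "TQ Q = \<lparr> fA = t_actions Q,
            fI = (t_init Q, init_z Q),
            fGoal = (\<lambda>(t, z). t_goal Q t z),
            fPre = (\<lambda>a (t, z). t_pre Q a t z),
            fSucc = (\<lambda>a (t, z). {(t_deff Q a t, z') | z'.
                       \<forall>Y. (t_num Q a Y = Some Inc \<longrightarrow> \<not> z' Y)
                         \<and> (t_num Q a Y = None \<longrightarrow> z' Y = z Y)}) \<rparr>"

definition QM :: "('p,'v,'a) qnp \<Rightarrow> (('p,'v) tst, 'v, ('v,'a) tact) gqnp" where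
  "QM Q = \<lparr> gA = t_actions Q,
            gInit = (\<lambda>t z. t = t_init Q \<and> z = init_z Q),
            gGoal = t_goal Q,
            gPre = t_pre Q,
            gDeff = t_deff Q,
            gNum = t_num Q \<rparr>"

end

theory Submission imports Defs begin

lemma cnt_bound:
  fixes g :: "nat \<Rightarrow> nat"
  assumes mono: "\<And>i. i \<ge> M \<Longrightarrow> g i \<le> g (Suc i)"
    and step: "\<And>i. i \<ge> M \<Longrightarrow> P i \<Longrightarrow> g i < B \<and> g i < g (Suc i)"
  shows "\<exists>N. \<forall>i\<ge>N. \<not> P i"
proof (rule ccontr)
  assume "\<not> ?thesis"
  then have inf: "\<forall>N. \<exists>i\<ge>N. P i" by auto
  have monoj: "g i \<le> g j" if "M \<le> i" "i \<le> j" for i j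
    using that(2)
  proof (induction j rule: dec_induct)
    case base then show ?case by simp
  next
    case (step n) then show ?case using mono[of n] that(1) by simp
  qed
  have "\<exists>i\<ge>M. g i \<ge> k" for k
  proof (induction k)
    case 0 then show ?case by auto
  next
    case (Suc k)
    then obtain i where i: "i \<ge> M" "g i \<ge> k" by auto
    obtain j where j: "j \<ge> i" "P j" using inf by auto
    have "g j \<ge> g i" using monoj i j by auto
    moreover have "g j < g (Suc j)" using step[of j] i j by auto
    ultimately show ?case using i j by (intro exI[of _ "Suc j"]) auto
  qed
  then obtain i where i: "i \<ge> M" "g i \<ge> B" by auto
  obtain j where j: "j \<ge> i" "P j" using inf by auto
  have "g j \<ge> g i" using monoj i j by auto
  moreover have "g j < B" using step[of j] i j by auto
  ultimately show False using i by auto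
qed

lemma eps_bound:
  fixes g :: "nat \<Rightarrow> real"
  assumes eps: "\<epsilon> > 0" and nn: "\<And>i. 0 \<le> g i"
    and mono: "\<And>i. i \<ge> M \<Longrightarrow> g (Suc i) \<le> g i"
    and step: "\<And>i. i \<ge> M \<Longrightarrow> P i \<Longrightarrow> g (Suc i) < g i \<and> (g i - g (Suc i) \<ge> \<epsilon> \<or> g (Suc i) = 0)"
  shows "\<exists>N. \<forall>i\<ge>N. \<not> P i"
proof (rule ccontr)
  assume "\<not> ?thesis"
  then have inf: "\<forall>N. \<exists>i\<ge>N. P i" by auto
  have monoj: "g j \<le> g i" if "M \<le> i" "i \<le> j" for i j
    using that(2)
  proof (induction j rule: dec_induct)
    case base then show ?case by simp
  next
    case (step n) then show ?case using mono[of n] that(1) by simp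
  qed
  have big: "g (Suc j) \<le> g j - \<epsilon>" if j: "M \<le> j" "P j" for j
  proof -
    obtain j' where j': "j' \<ge> Suc j" "P j'" using inf by auto
    have "g (Suc j') < g j'" using step[of j'] j j' by auto
    moreover have "g j' \<le> g (Suc j)" using monoj[of "Suc j" j'] j j' by auto
    moreover have "0 \<le> g (Suc j')" by (rule nn)
    ultimately have "g (Suc j) \<noteq> 0" by auto
    then show ?thesis using step[OF j] by auto
  qed
  have "\<exists>i\<ge>M. g i \<le> g M - real k * \<epsilon>" for k
  proof (induction k)
    case 0 then show ?case by auto
  next
    case (Suc k)
    then obtain i where i: "i \<ge> M" "g i \<le> g M - real k * \<epsilon>" by auto
    obtain j where j: "j \<ge> i" "P j" using inf by auto
    have "g j \<le> g i" using monoj i j by auto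
    moreover have "g (Suc j) \<le> g j - \<epsilon>" using big[of j] i j by auto
    ultimately show ?case using i j by (intro exI[of _ "Suc j"]) (auto simp: algebra_simps)
  qed
  moreover obtain k :: nat where "g M < real k * \<epsilon>" using reals_Archimedean3[OF eps] by auto
  ultimately obtain i where "g i \<le> g M - real k * \<epsilon>" by auto
  with \<open>g M < real k * \<epsilon>\<close> nn[of i] show False by auto
qed

definition inv_stk :: "('p,'v) tst \<Rightarrow> 'v list \<Rightarrow> bool" where
  "inv_stk t s \<longleftrightarrow> distinct s \<and> tDepth t = (\<lambda>k. k = length s) \<and> tIn t = (\<lambda>X. X \<in> set s)
     \<and> tIndex t = (\<lambda>X k. 1 \<le> k \<and> k \<le> length s \<and> s ! (k - 1) = X)"

fun stk_upd :: "('v,'a) tact \<Rightarrow> 'v list \<Rightarrow> 'v list" where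
  "stk_upd (Push X d) s = s @ [X]"
| "stk_upd (Pop X d) s = butlast s"
| "stk_upd _ s = s"

primrec stkseq :: "(nat \<Rightarrow> ('v,'a) tact) \<Rightarrow> nat \<Rightarrow> 'v list" where
  "stkseq act 0 = []"
| "stkseq act (Suc i) = stk_upd (act i) (stkseq act i)"

lemma inv_push_depth: "inv_stk t s \<Longrightarrow> t_pre Q (Push X d) t z \<Longrightarrow> d = length s \<and> X \<notin> set s"
  by (auto simp: inv_stk_def)

lemma inv_pop_depth: "inv_stk t s \<Longrightarrow> t_pre Q (Pop X d) t z \<Longrightarrow> d = length s \<and> (\<exists>b. s = b @ [X])"
proof -
  assume a: "inv_stk t s" "t_pre Q (Pop X d) t z"
  then have d: "d = length s" "1 \<le> d" "s ! (d - 1) = X" by (auto simp: inv_stk_def)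
  then have "s \<noteq> []" by auto
  then have "s = butlast s @ [last s]" by simp
  moreover have "last s = X" using d \<open>s \<noteq> []\<close> by (simp add: last_conv_nth)
  ultimately show ?thesis using d by metis
qed

lemma inv_index: "inv_stk t s \<Longrightarrow> tIndex t X d \<Longrightarrow> 1 \<le> d \<and> d \<le> length s \<and> s ! (d - 1) = X"
  by (auto simp: inv_stk_def)

lemma inv_step:
  assumes "inv_stk t s" "t_pre Q a t z"
  shows "inv_stk (t_deff Q a t) (stk_upd a s)"
proof (cases a)
  case (Push X d)
  with assms have d: "d = length s" "X \<notin> set s" using inv_push_depth by metis+
  show ?thesis using assms(1) unfolding Push inv_stk_def
    by (auto simp: d nth_append fun_eq_iff)
next
  case (Pop X d)
  with assms obtain b where d: "d = length s" "s = b @ [X]" using inv_pop_depth by metis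
  have "distinct s" using assms(1) by (simp add: inv_stk_def)
  then have Xb: "X \<notin> set b" using d by simp
  show ?thesis using assms(1) Xb unfolding Pop inv_stk_def d
    by (auto simp: nth_append fun_eq_iff)
qed (use assms in \<open>auto simp: inv_stk_def\<close>)

lemma eps_step_unf:
  assumes "eps_step (QM Q) \<epsilon> \<pi> s s'"
  obtains a where "\<pi> (fst s, zeros (snd s)) = Some a" "a \<in> t_actions Q"
    "t_pre Q a (fst s) (zeros (snd s))" "fst s' = t_deff Q a (fst s)"
    "\<And>X. (case t_num Q a X of
            Some Inc \<Rightarrow> snd s' X > snd s X
          | Some Dec \<Rightarrow> snd s' X < snd s X \<and> 0 \<le> snd s' X
          | None \<Rightarrow> snd s' X = snd s X)"
    "eps_ok \<epsilon> (snd s) (snd s')"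
  using assms unfolding eps_step_def g_succ_def QM_def by auto

lemma proj_step:
  assumes ng: "\<not> g_goal (QM Q) s" and st: "eps_step (QM Q) \<epsilon> \<pi> s s'" and nn: "\<forall>X. 0 \<le> snd s X"
  shows "fond_step (TQ Q) \<pi> (fst s, zeros (snd s)) (fst s', zeros (snd s'))"
    and "\<forall>X. 0 \<le> snd s' X"
proof -
  obtain a where a: "\<pi> (fst s, zeros (snd s)) = Some a" "a \<in> t_actions Q"
    "t_pre Q a (fst s) (zeros (snd s))" "fst s' = t_deff Q a (fst s)"
    "\<And>X. (case t_num Q a X of
            Some Inc \<Rightarrow> snd s' X > snd s X
          | Some Dec \<Rightarrow> snd s' X < snd s X \<and> 0 \<le> snd s' X
          | None \<Rightarrow> snd s' X = snd s X)"
    using eps_step_unf[OF st] by metis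
  have z: "(t_num Q a Y = Some Inc \<longrightarrow> \<not> zeros (snd s') Y) \<and> (t_num Q a Y = None \<longrightarrow> zeros (snd s') Y = zeros (snd s) Y)" for Y
    using a(5)[of Y] nn[rule_format, of Y] by (auto simp: zeros_def split: option.splits neff.splits)
  show "\<forall>X. 0 \<le> snd s' X"
  proof
    fix X show "0 \<le> snd s' X"
      using a(5)[of X] nn[rule_format, of X] by (auto split: option.splits neff.splits)
  qed
  show "fond_step (TQ Q) \<pi> (fst s, zeros (snd s)) (fst s', zeros (snd s'))"
    unfolding fond_step_def using ng a z by (auto simp: TQ_def g_goal_def QM_def)
qed

lemma traj_reach:
  assumes init: "g_init (QM Q) (f 0)"
    and steps: "\<forall>i<n. \<not> g_goal (QM Q) (f i) \<and> eps_step (QM Q) \<epsilon> \<pi> (f i) (f (Suc i))"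
    and "i \<le> n"
  shows "(\<forall>X. 0 \<le> snd (f i) X) \<and> (fond_step (TQ Q) \<pi>)\<^sup>*\<^sup>* (fI (TQ Q)) (fst (f i), zeros (snd (f i)))"
  using \<open>i \<le> n\<close>
proof (induction i)
  case 0
  then show ?case using init by (auto simp: g_init_def QM_def TQ_def)
next
  case (Suc i)
  then have IH: "(\<forall>X. 0 \<le> snd (f i) X)" "(fond_step (TQ Q) \<pi>)\<^sup>*\<^sup>* (fI (TQ Q)) (fst (f i), zeros (snd (f i)))"
    and i: "i < n" by auto
  show ?case using proj_step[of Q "f i" \<epsilon> \<pi> "f (Suc i)"] steps i IH
    by (meson rtranclp.rtrancl_into_rtrancl)
qed

lemma fin_case:
  assumes sc: "strong_cyclic (TQ Q) \<pi>" and mf: "max_fin_traj (QM Q) \<epsilon> \<pi> f n"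
  shows "\<exists>i\<le>n. g_goal (QM Q) (f i)"
proof (rule ccontr)
  assume "\<not> ?thesis"
  then have ngn: "\<not> g_goal (QM Q) (f n)" by auto
  have r: "(fond_step (TQ Q) \<pi>)\<^sup>*\<^sup>* (fI (TQ Q)) (fst (f n), zeros (snd (f n)))"
    using traj_reach[of Q f n \<epsilon> \<pi> n] mf unfolding max_fin_traj_def by auto
  then obtain g where g: "(fond_step (TQ Q) \<pi>)\<^sup>*\<^sup>* (fst (f n), zeros (snd (f n))) g" "fGoal (TQ Q) g"
    using sc unfolding strong_cyclic_def by blast
  have na: "\<not> pol_applicable (QM Q) \<pi> (f n)" using mf ngn unfolding max_fin_traj_def by auto
  from g(1) show False
  proof (cases rule: converse_rtranclpE)
    case base
    then show False using g(2) ngn by (auto simp: TQ_def g_goal_def QM_def)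
  next
    case (step y)
    then show False using na unfolding fond_step_def pol_applicable_def
      by (auto simp: TQ_def QM_def)
  qed
qed

lemma tCT_deff: "tCT (t_deff Q a t) = (if a = Move then tCT t + 1 else tCT t)"
  by (cases a) auto

lemma Act_in: "Act b \<in> t_actions Q \<Longrightarrow> \<not> has_dec Q b"
  by (auto simp: t_actions_def)

lemma ActD_in: "ActD b X d \<in> t_actions Q \<Longrightarrow> qN Q b X = Some Dec"
  by (auto simp: t_actions_def)

lemma Push_in: "Push X d \<in> t_actions Q \<Longrightarrow> d < nV Q"
  by (auto simp: t_actions_def)

lemma noinc: "tIn t X \<Longrightarrow> t_pre Q a t z \<Longrightarrow> t_num Q a X \<noteq> Some Inc"
  by (cases a) auto

lemma ev_fin:
  fixes P :: "'b \<Rightarrow> nat \<Rightarrow> bool"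
  assumes "finite S" "\<And>x. x \<in> S \<Longrightarrow> \<exists>N. \<forall>i\<ge>N. P x i"
  shows "\<exists>N. \<forall>i\<ge>N. \<forall>x\<in>S. P x i"
proof -
  have "\<forall>x\<in>S. eventually (\<lambda>i. P x i) sequentially"
    using assms(2) by (simp add: eventually_sequentially)
  then have "eventually (\<lambda>i. \<forall>x\<in>S. P x i) sequentially"
    by (simp add: eventually_ball_finite_distrib[OF assms(1)])
  then show ?thesis by (simp add: eventually_sequentially)
qed

locale inftraj =
  fixes Q :: "('p,'v,'a) qnp"
    and \<pi> :: "('p,'v) tst \<times> ('v \<Rightarrow> bool) \<Rightarrow> ('v,'a) tact option"
    and \<epsilon> :: real and f :: "nat \<Rightarrow> ('p,'v) tst \<times> ('v \<Rightarrow> real)" and act :: "nat \<Rightarrow> ('v,'a) tact"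
  assumes sc: "strong_cyclic (TQ Q) \<pi>"
    and eps: "\<epsilon> > 0"
    and init: "g_init (QM Q) (f 0)"
    and ng: "\<And>i. \<not> g_goal (QM Q) (f i)"
    and es: "\<And>i. eps_step (QM Q) \<epsilon> \<pi> (f i) (f (Suc i))"
    and a1: "\<And>i. \<pi> (fst (f i), zeros (snd (f i))) = Some (act i)"
    and a2: "\<And>i. act i \<in> t_actions Q"
    and a3: "\<And>i. t_pre Q (act i) (fst (f i)) (zeros (snd (f i)))"
    and a4: "\<And>i. fst (f (Suc i)) = t_deff Q (act i) (fst (f i))"
    and a5: "\<And>i X. (case t_num Q (act i) X of
            Some Inc \<Rightarrow> snd (f (Suc i)) X > snd (f i) X
          | Some Dec \<Rightarrow> snd (f (Suc i)) X < snd (f i) X \<and> 0 \<le> snd (f (Suc i)) X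
          | None \<Rightarrow> snd (f (Suc i)) X = snd (f i) X)"
    and a6: "\<And>i. eps_ok \<epsilon> (snd (f i)) (snd (f (Suc i)))"
begin

abbreviation "T i \<equiv> fst (f i)"
abbreviation "v i \<equiv> snd (f i)"
abbreviation "stk i \<equiv> stkseq act i"
abbreviation "dep i \<equiv> length (stk i)"
abbreviation "\<alpha> i \<equiv> (T i, zeros (v i))"

lemma reach: "(\<forall>X. 0 \<le> v i X) \<and> (fond_step (TQ Q) \<pi>)\<^sup>*\<^sup>* (fI (TQ Q)) (\<alpha> i)"
  using traj_reach[of Q f i \<epsilon> \<pi> i] init ng es by auto

lemma nn: "0 \<le> v i X" using reach by auto

lemma inv: "inv_stk (T i) (stk i)"
proof (induction i)
  case 0
  then show ?case using init by (auto simp: g_init_def QM_def t_init_def inv_stk_def fun_eq_iff)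
next
  case (Suc i)
  then show ?case using inv_step[OF Suc a3[of i]] a4[of i] by simp
qed

lemma dep_bound: "dep i \<le> nV Q"
proof (induction i)
  case (Suc i)
  show ?case
  proof (cases "act i")
    case (Push X d)
    then have "d = dep i" using inv_push_depth[OF inv a3[of i, unfolded Push]] by simp
    moreover have "d < nV Q" using Push_in a2[of i] Push by simp
    ultimately show ?thesis using Push by simp
  qed (use Suc in auto)
qed simp

lemma L_eps:
  assumes "\<forall>i\<ge>M. tIn (T i) X"
  shows "\<exists>N. \<forall>i\<ge>N. \<forall>b d. act i \<noteq> ActD b X d"
proof -
  have "\<exists>N. \<forall>i\<ge>N. \<not> (\<exists>b d. act i = ActD b X d)"
  proof (rule eps_bound[where g = "\<lambda>i. v i X" and M = M, OF eps nn])
    fix i assume i: "M \<le> i"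
    have ni: "t_num Q (act i) X \<noteq> Some Inc" using noinc[OF _ a3[of i]] assms i by auto
    show "v (Suc i) X \<le> v i X" using a5[of i X] ni by (auto split: option.splits neff.splits)
    assume "\<exists>b d. act i = ActD b X d"
    then obtain b d where ad: "act i = ActD b X d" by auto
    then have "t_num Q (act i) X = Some Dec" using ActD_in a2[of i] by simp
    then have lt: "v (Suc i) X < v i X" using a5[of i X] by simp
    moreover have "v i X - v (Suc i) X \<ge> \<epsilon> \<or> v (Suc i) X = 0"
      using a6[of i] lt unfolding eps_ok_def by (auto dest!: spec[of _ X])
    ultimately show "v (Suc i) X < v i X \<and> (\<epsilon> \<le> v i X - v (Suc i) X \<or> v (Suc i) X = 0)" by auto
  qed
  then show ?thesis by auto
qed

lemma determ:
  assumes "act i = Act b" "fond_step (TQ Q) \<pi> (\<alpha> i) s'"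
  shows "s' = \<alpha> (Suc i)"
proof -
  have nd: "\<not> has_dec Q b" using Act_in a2[of i] assms(1) by simp
  from assms(2) obtain z' where s': "s' = (t_deff Q (act i) (T i), z')"
    and z': "\<forall>Y. (t_num Q (act i) Y = Some Inc \<longrightarrow> \<not> z' Y) \<and> (t_num Q (act i) Y = None \<longrightarrow> z' Y = zeros (v i) Y)"
    unfolding fond_step_def using a1[of i] by (auto simp: TQ_def)
  have "z' = zeros (v (Suc i))"
  proof
    fix Y
    have "qN Q b Y \<noteq> Some Dec" using nd by (auto simp: has_dec_def)
    then show "z' Y = zeros (v (Suc i)) Y"
    proof (cases "qN Q b Y")
      case None
      then show ?thesis using z'[rule_format, of Y] a5[of i Y] assms(1) by (simp add: zeros_def)
    next
      case (Some e)
      then have "e = Inc" using \<open>qN Q b Y \<noteq> Some Dec\<close> by (cases e) auto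
      then show ?thesis using Some z'[rule_format, of Y] a5[of i Y] nn[of i Y] assms(1) by (simp add: zeros_def)
    qed
  qed
  then show ?thesis using s' a4[of i] by (simp only:)
qed

lemma main: False
proof -
  have A: "\<exists>d. \<forall>M. \<exists>i\<ge>M. dep i = d"
  proof (rule ccontr)
    assume "\<not> ?thesis"
    then have hA: "\<And>d. d \<in> {..nV Q} \<Longrightarrow> \<exists>N. \<forall>i\<ge>N. dep i \<noteq> d" by auto
    have "\<exists>N. \<forall>i\<ge>N. \<forall>d\<in>{..nV Q}. dep i \<noteq> d" by (rule ev_fin) (simp_all add: hA)
    then obtain N where "\<forall>i\<ge>N. \<forall>d\<in>{..nV Q}. dep i \<noteq> d" by auto
    then show False using dep_bound[of N] by auto
  qed
  define ds where "ds = (LEAST d. \<forall>M. \<exists>i\<ge>M. dep i = d)"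
  have ds_inf: "\<forall>M. \<exists>i\<ge>M. dep i = ds" unfolding ds_def using A by (rule LeastI_ex)
  have hB: "\<And>d. d \<in> {..<ds} \<Longrightarrow> \<exists>N. \<forall>i\<ge>N. dep i \<noteq> d"
  proof -
    fix d assume "d \<in> {..<ds}"
    then have "d < ds" by simp
    then have "\<not> (\<forall>M. \<exists>i\<ge>M. dep i = d)" unfolding ds_def by (rule not_less_Least)
    then show "\<exists>N. \<forall>i\<ge>N. dep i \<noteq> d" by auto
  qed
  have "\<exists>N. \<forall>i\<ge>N. \<forall>d\<in>{..<ds}. dep i \<noteq> d" by (rule ev_fin) (simp_all add: hB)
  then obtain N where N0: "\<forall>i\<ge>N. \<forall>d\<in>{..<ds}. dep i \<noteq> d" by auto
  have N: "dep i \<ge> ds" if "i \<ge> N" for i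
  proof (rule ccontr)
    assume "\<not> dep i \<ge> ds"
    then have "dep i \<in> {..<ds}" by simp
    then show False using N0 that by auto
  qed
  have frz: "take ds (stk i) = take ds (stk N)" if "i \<ge> N" for i
    using that
  proof (induction i rule: dec_induct)
    case base then show ?case by simp
  next
    case (step n)
    have d1a: "dep n \<ge> ds" using N step(1) by simp
    have d1b: "dep (Suc n) \<ge> ds" by (rule N) (use step(1) in simp)
    note d1 = d1a d1b
    show ?case
    proof (cases "act n")
      case (Pop X d)
      then have "dep (Suc n) = dep n - 1" by simp
      then have "ds < dep n" using d1 inv_pop_depth[OF inv a3[of n, unfolded Pop]] by auto
      then show ?thesis using Pop step(3) take_butlast[of ds "stk n"] by simp
    qed (use step d1 in auto)
  qed
  define S where "S = set (take ds (stk N))"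
  have inS: "tIn (T i) X" if "i \<ge> N" "X \<in> S" for i X
  proof -
    have "X \<in> set (stk i)" using frz[OF that(1)] that(2) unfolding S_def
      by (metis in_set_takeD)
    then show ?thesis using inv[of i] by (simp add: inv_stk_def)
  qed
  have "\<exists>N. \<forall>i\<ge>N. \<forall>b d. act i \<noteq> ActD b X d" if "X \<in> S" for X
  proof (rule L_eps)
    show "\<forall>i\<ge>N. tIn (T i) X" using inS that by simp
  qed
  then have "\<exists>N. \<forall>i\<ge>N. \<forall>X\<in>S. \<forall>b d. act i \<noteq> ActD b X d"
    by (intro ev_fin) (simp_all add: S_def)
  then obtain N1 where N1': "\<forall>i\<ge>N1. \<forall>X\<in>S. \<forall>b d. act i \<noteq> ActD b X d" by auto
  have N1: "act i \<noteq> ActD b X d" if "i \<ge> N1" "X \<in> S" for i X b d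
    using N1' that by simp
  define N2 where "N2 = max N N1"
  have E2: "act i \<noteq> ActD b X d" if "i \<ge> N2" "d \<le> ds" for i b X d
  proof
    assume ad: "act i = ActD b X d"
    then have "tIndex (T i) X d" using a3[of i] by simp
    from inv_index[OF inv this] have d: "1 \<le> d" "d \<le> dep i" "stk i ! (d - 1) = X" by auto
    have "take ds (stk i) ! (d - 1) = X" using d that by simp
    moreover have "d - 1 < length (take ds (stk i))"
    proof -
      have "d - 1 < dep i" "d - 1 < ds" using d(1,2) that(2) by linarith+
      then show ?thesis by simp
    qed
    ultimately have "X \<in> set (take ds (stk i))" by (metis nth_mem)
    then have "X \<in> S" using frz[of i] that unfolding S_def N2_def by simp
    then show False using N1[of i X b d] ad that unfolding N2_def by simp
  qed
  show False
  proof (cases "\<forall>M. \<exists>i\<ge>M. \<exists>X. act i = Push X ds")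
    case True
    have "\<exists>N. \<forall>i\<ge>N. \<not> (\<exists>X. act i = Push X ds)"
    proof (rule cnt_bound[where g = "\<lambda>i. tC (T i) ds" and M = N2 and B = "MaxC Q"])
      fix i assume i: "N2 \<le> i"
      have dsi: "ds \<le> dep i" using N[of i] i unfolding N2_def by simp
      show "tC (T i) ds \<le> tC (T (Suc i)) ds"
      proof (cases "act i")
        case (Push X d)
        then have "d = dep i" using inv_push_depth[OF inv a3[of i, unfolded Push]] by simp
        then show ?thesis using Push a4[of i] dsi by auto
      next
        case (ActD b X d)
        then have "\<not> d \<le> ds" using E2[OF i] by blast
        then show ?thesis using ActD a4[of i] by auto
      qed (use a4[of i] in auto)
      assume "\<exists>X. act i = Push X ds"
      then obtain X where P: "act i = Push X ds" by auto
      show "tC (T i) ds < MaxC Q \<and> tC (T i) ds < tC (T (Suc i)) ds"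
        using a3[of i] a4[of i] P by auto
    qed
    then obtain N' where N': "\<forall>i\<ge>N'. \<not> (\<exists>X. act i = Push X ds)" by auto
    from True have "\<exists>i\<ge>N'. \<exists>X. act i = Push X ds" by (rule spec)
    then show False using N' by auto
  next
    case False
    then obtain M where M: "\<And>i X. i \<ge> M \<Longrightarrow> act i \<noteq> Push X ds" by auto
    have "\<exists>i\<ge>max N2 M. dep i = ds" using ds_inf by (rule spec)
    then obtain i0 where i0: "i0 \<ge> max N2 M" "dep i0 = ds" by blast
    have dc: "dep i = ds" if "i \<ge> i0" for i
      using that
    proof (induction i rule: dec_induct)
      case base then show ?case using i0 by simp
    next
      case (step n)
      show ?case
      proof (cases "act n")
        case (Push X d)
        then have "d = dep n" using inv_push_depth[OF inv a3[of n, unfolded Push]] by simp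
        then show ?thesis using Push M[of n X] step i0 by auto
      next
        case (Pop X d)
        obtain b where "stk n = b @ [X]" using inv_pop_depth[OF inv a3[of n, unfolded Pop]] by auto
        then have "dep (Suc n) < ds" using Pop step by simp
        moreover have "dep (Suc n) \<ge> ds" using N[of "Suc n"] step i0 unfolding N2_def by simp
        ultimately show ?thesis by simp
      qed (use step in auto)
    qed
    have notM: "\<exists>N. \<forall>i\<ge>N. \<not> (act i = Move)"
    proof (rule cnt_bound[where g = "\<lambda>i. tCT (T i)" and M = 0 and B = "MaxC Q"])
      fix i
      show "tCT (T i) \<le> tCT (T (Suc i))" using a4[of i] by (simp add: tCT_deff)
      assume "act i = Move"
      then show "tCT (T i) < MaxC Q \<and> tCT (T i) < tCT (T (Suc i))"
        using a3[of i] a4[of i] by auto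
    qed
    then obtain N3' where N3': "\<And>i. i \<ge> N3' \<Longrightarrow> act i \<noteq> Move" by auto
    define N3 where "N3 = max N3' i0"
    have onlyAct: "\<exists>b. act i = Act b" if "i \<ge> N3" for i
    proof (cases "act i")
      case (Push X d)
      then have "d = dep i" using inv_push_depth[OF inv a3[of i, unfolded Push]] by simp
      then show ?thesis using Push M[of i X] dc[of i] that i0 unfolding N3_def by auto
    next
      case (Pop X d)
      obtain b where "stk i = b @ [X]" using inv_pop_depth[OF inv a3[of i, unfolded Pop]] by auto
      then have "dep (Suc i) < dep i" using Pop by simp
      then show ?thesis using dc[of i] dc[of "Suc i"] that unfolding N3_def by simp
    next
      case Move
      then show ?thesis using N3' that unfolding N3_def by simp
    next
      case (ActD b X d)
      then have "tIndex (T i) X d" using a3[of i] by simp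
      from inv_index[OF inv this] have "d \<le> ds" using dc[of i] that unfolding N3_def by simp
      then show ?thesis using E2[of i d b X] ActD that i0 unfolding N3_def N2_def by simp
    qed simp
    have rf: "\<exists>k. s = \<alpha> (N3 + k)" if "(fond_step (TQ Q) \<pi>)\<^sup>*\<^sup>* (\<alpha> N3) s" for s
      using that
    proof (induction rule: rtranclp_induct)
      case base then show ?case by (auto intro: exI[of _ 0])
    next
      case (step y z)
      then obtain k where k: "y = \<alpha> (N3 + k)" by auto
      obtain b where "act (N3 + k) = Act b" using onlyAct[of "N3 + k"] by auto
      from determ[OF this] step(2) k have "z = \<alpha> (Suc (N3 + k))" by simp
      then show ?case by (metis add_Suc_right)
    qed
    obtain g where g: "(fond_step (TQ Q) \<pi>)\<^sup>*\<^sup>* (\<alpha> N3) g" "fGoal (TQ Q) g"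
      using sc reach[of N3] unfolding strong_cyclic_def by blast
    then obtain k where "g = \<alpha> (N3 + k)" using rf by blast
    then show False using g(2) ng[of "N3 + k"] by (auto simp: TQ_def g_goal_def QM_def)
  qed
qed

end

theorem theorem12:
  fixes Q :: "('p,'v,'a) qnp"
    and \<pi> :: "('p,'v) tst \<times> ('v \<Rightarrow> bool) \<Rightarrow> ('v,'a) tact option"
  assumes "wf_qnp Q"
    and "strong_cyclic (TQ Q) \<pi>"
  shows "qnp_solves (QM Q) \<pi>"
  unfolding qnp_solves_def
proof (intro allI impI conjI)
  fix \<epsilon> :: real and f n
  assume "max_fin_traj (QM Q) \<epsilon> \<pi> f n"
  then show "\<exists>i\<le>n. g_goal (QM Q) (f i)" using fin_case assms(2) by blast
next
  fix \<epsilon> :: real and f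
  assume eps: "\<epsilon> > 0" and mi: "max_inf_traj (QM Q) \<epsilon> \<pi> f"
  show "\<exists>i. g_goal (QM Q) (f i)"
  proof (rule ccontr)
    assume no: "\<not> ?thesis"
    have es: "eps_step (QM Q) \<epsilon> \<pi> (f i) (f (Suc i))" for i using mi by (simp add: max_inf_traj_def)
    have "\<exists>a. \<pi> (fst (f i), zeros (snd (f i))) = Some a \<and> a \<in> t_actions Q \<and>
      t_pre Q a (fst (f i)) (zeros (snd (f i))) \<and> fst (f (Suc i)) = t_deff Q a (fst (f i)) \<and>
      (\<forall>X. (case t_num Q a X of
            Some Inc \<Rightarrow> snd (f (Suc i)) X > snd (f i) X
          | Some Dec \<Rightarrow> snd (f (Suc i)) X < snd (f i) X \<and> 0 \<le> snd (f (Suc i)) X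
          | None \<Rightarrow> snd (f (Suc i)) X = snd (f i) X)) \<and>
      eps_ok \<epsilon> (snd (f i)) (snd (f (Suc i)))" for i
      by (rule eps_step_unf[OF es[of i]]) blast
    then obtain act where act: "\<And>i. \<pi> (fst (f i), zeros (snd (f i))) = Some (act i) \<and> act i \<in> t_actions Q \<and>
      t_pre Q (act i) (fst (f i)) (zeros (snd (f i))) \<and> fst (f (Suc i)) = t_deff Q (act i) (fst (f i)) \<and>
      (\<forall>X. (case t_num Q (act i) X of
            Some Inc \<Rightarrow> snd (f (Suc i)) X > snd (f i) X
          | Some Dec \<Rightarrow> snd (f (Suc i)) X < snd (f i) X \<and> 0 \<le> snd (f (Suc i)) X
          | None \<Rightarrow> snd (f (Suc i)) X = snd (f i) X)) \<and>
      eps_ok \<epsilon> (snd (f i)) (snd (f (Suc i)))"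
      by metis
    interpret inftraj Q \<pi> \<epsilon> f act
    proof
      show "strong_cyclic (TQ Q) \<pi>" by (rule assms(2))
      show "\<epsilon> > 0" by (rule eps)
      show "g_init (QM Q) (f 0)" using mi by (simp add: max_inf_traj_def)
      show "\<And>i. \<not> g_goal (QM Q) (f i)" using no by blast
      show "\<And>i. eps_step (QM Q) \<epsilon> \<pi> (f i) (f (Suc i))" by (rule es)
    qed (use act in blast)+
    show False by (rule main)
  qed
qed

end
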